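(* Let $(\mathcal{X},\rho)$ be a length space and $\eta:\mathcal{X}\to\mathcal{Y}$ a function. Then for every $x\in\mathcal{X}$, $\mathrm{margin}_\eta(x)=\rho(x,\partial_\eta\mathcal{X})$.
   Context: A length space: $\rho(x,x')=\inf_\gamma\ell(\gamma)$ over continuous paths $\gamma:[0,1]\to\mathcal{X}$ from $x$ to $x'$, $\ell(\gamma)$ denoting path length. $\mathrm{margin}_\eta(x)=\inf\{\rho(x,x'):\eta(x')\ne\eta(x)\}$, $\partial_\eta\mathcal{X}=\{x:\mathrm{margin}_\eta(x)=0\}$, and $\rho(x,Z)=\inf_{z\in Z}\rho(x,z)$. *)

theory Defs
  imports "HOL-Analysis.Analysis"
begin

definition path_length :: "(real \<Rightarrow> 'a::metric_space) \<Rightarrow> ereal" where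
  "path_length \<gamma> =
     (SUP p \<in> {(n, t). (t::nat \<Rightarrow> real) 0 = 0 \<and> t n = 1 \<and> (\<forall>i<n. t i \<le> t (Suc i))}.
        ereal (\<Sum>i<fst p. dist (\<gamma> (snd p i)) (\<gamma> (snd p (Suc i)))))"

definition length_space :: "'a::metric_space itself \<Rightarrow> bool" where
  "length_space _ \<longleftrightarrow>
     (\<forall>x x' :: 'a. ereal (dist x x') =
        (INF \<gamma> \<in> {\<gamma>. path \<gamma> \<and> pathstart \<gamma> = x \<and> pathfinish \<gamma> = x'}. path_length \<gamma>))"

definition margin :: "('a::metric_space \<Rightarrow> 'b) \<Rightarrow> 'a \<Rightarrow> ereal" where
  "margin \<eta> x = (INF x' \<in> {x'. \<eta> x' \<noteq> \<eta> x}. ereal (dist x x'))"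

definition decision_boundary :: "('a::metric_space \<Rightarrow> 'b) \<Rightarrow> 'a set" where
  "decision_boundary \<eta> = {x. margin \<eta> x = 0}"

definition dist_to_set :: "'a::metric_space \<Rightarrow> 'a set \<Rightarrow> ereal" where
  "dist_to_set x Z = (INF z \<in> Z. ereal (dist x z))"

end

theory Submission
  imports Defs
begin

lemma margin_le:
  assumes "\<eta> x' \<noteq> \<eta> x"
  shows "margin \<eta> x \<le> ereal (dist x x')"
  unfolding margin_def using assms by (intro INF_lower) auto

lemma margin_nonneg: "0 \<le> margin \<eta> x"
  unfolding margin_def by (intro INF_greatest) auto

lemma margin_zeroI:
  assumes "\<And>e. e > 0 \<Longrightarrow> \<exists>z'. \<eta> z' \<noteq> \<eta> z \<and> dist z z' < e"
  shows "margin \<eta> z = 0"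
proof (rule antisym)
  show "margin \<eta> z \<le> 0"
  proof (rule ereal_le_epsilon2)
    fix e :: real assume "0 < e"
    then obtain z' where "\<eta> z' \<noteq> \<eta> z" "dist z z' < e" using assms by blast
    have "margin \<eta> z \<le> ereal (dist z z')" by (rule margin_le) fact
    also have "\<dots> \<le> 0 + ereal e" using \<open>dist z z' < e\<close> by simp
    finally show "margin \<eta> z \<le> 0 + ereal e" .
  qed
qed (rule margin_nonneg)

lemma margin_zeroD:
  assumes "margin \<eta> z = 0" "e > 0"
  shows "\<exists>z'. \<eta> z' \<noteq> \<eta> z \<and> dist z z' < e"
proof -
  have "(INF x' \<in> {x'. \<eta> x' \<noteq> \<eta> z}. ereal (dist z x')) < ereal e"
    using assms unfolding margin_def by simp
  then show ?thesis by (auto simp: INF_less_iff)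
qed

lemma path_length_ge:
  assumes "s \<in> {0..1}"
  shows "ereal (dist (\<gamma> 0) (\<gamma> s)) \<le> path_length \<gamma>"
proof -
  define t where "t = (\<lambda>i::nat. if i = 0 then 0 else if i = 1 then s else (1::real))"
  have mem: "(2::nat, t) \<in> {(n, t). (t::nat \<Rightarrow> real) 0 = 0 \<and> t n = 1 \<and> (\<forall>i<n. t i \<le> t (Suc i))}"
    using assms by (auto simp: t_def less_2_cases_iff)
  have "ereal (dist (\<gamma> 0) (\<gamma> s)) \<le> ereal (\<Sum>i<fst (2::nat, t). dist (\<gamma> (snd (2::nat, t) i)) (\<gamma> (snd (2::nat, t) (Suc i))))"
    by (simp add: t_def numeral_2_eq_2)
  also have "\<dots> \<le> path_length \<gamma>"
    unfolding path_length_def by (rule SUP_upper[OF mem])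
  finally show ?thesis .
qed

lemma boundary_on_path:
  assumes "path \<gamma>" "\<eta> (\<gamma> 1) \<noteq> \<eta> (\<gamma> 0)"
  shows "\<exists>s\<in>{0..1}. \<gamma> s \<in> decision_boundary \<eta>"
proof -
  define S where "S = {t \<in> {0..1::real}. \<eta> (\<gamma> t) \<noteq> \<eta> (\<gamma> 0)}"
  have "1 \<in> S" using assms by (simp add: S_def)
  have bdd: "bdd_below S" unfolding S_def by (rule bdd_belowI[of _ 0]) auto
  define s where "s = Inf S"
  have s0: "0 \<le> s" unfolding s_def using \<open>1 \<in> S\<close> by (intro cInf_greatest) (auto simp: S_def)
  have s1: "s \<le> 1" unfolding s_def using \<open>1 \<in> S\<close> bdd by (rule cInf_lower)
  have cont: "continuous_on {0..1} \<gamma>" using assms(1) by (simp add: path_def)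
  have "margin \<eta> (\<gamma> s) = 0"
  proof (rule margin_zeroI)
    fix e :: real assume "e > 0"
    have "\<forall>\<epsilon>>0. \<exists>\<delta>>0. \<forall>x'\<in>{0..1}. dist x' s < \<delta> \<longrightarrow> dist (\<gamma> x') (\<gamma> s) < \<epsilon>"
      using cont s0 s1 unfolding continuous_on_iff by auto
    then obtain d where d: "d > 0" "\<And>t. t \<in> {0..1} \<Longrightarrow> dist t s < d \<Longrightarrow> dist (\<gamma> t) (\<gamma> s) < e"
      using \<open>e > 0\<close> by blast
    show "\<exists>z'. \<eta> z' \<noteq> \<eta> (\<gamma> s) \<and> dist (\<gamma> s) z' < e"
    proof (cases "\<eta> (\<gamma> s) = \<eta> (\<gamma> 0)")
      case True
      have "Inf S < s + d" using d(1) s_def by simp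
      then obtain t where t: "t \<in> S" "t < s + d" using cInf_less_iff[of S "s + d"] \<open>1 \<in> S\<close> bdd s_def by auto
      have "s \<le> t" unfolding s_def using t(1) bdd by (rule cInf_lower)
      then have "dist t s < d" using t(2) by (simp add: dist_real_def)
      then have "dist (\<gamma> t) (\<gamma> s) < e" using d(2) t(1) by (auto simp: S_def)
      then show ?thesis using t(1) True by (auto simp: S_def dist_commute)
    next
      case False
      then have "s \<noteq> 0" by auto
      with s0 have "s > 0" by simp
      define t where "t = max 0 (s - d/2)"
      have tin: "t \<in> {0..1}" using s1 d(1) by (auto simp: t_def)
      have "t < s" using \<open>s > 0\<close> d(1) by (auto simp: t_def)
      have "t \<notin> S"
      proof
        assume "t \<in> S"
        then have "s \<le> t" unfolding s_def using bdd by (rule cInf_lower)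
        with \<open>t < s\<close> show False by simp
      qed
      then have eq: "\<eta> (\<gamma> t) = \<eta> (\<gamma> 0)" using tin by (auto simp: S_def)
      have "dist t s < d" using \<open>t < s\<close> d(1) s0 by (auto simp: t_def dist_real_def)
      then have "dist (\<gamma> t) (\<gamma> s) < e" using d(2) tin by auto
      then show ?thesis using eq False by (metis dist_commute)
    qed
  qed
  then show ?thesis using s0 s1 by (auto simp: decision_boundary_def)
qed

theorem lemma9:
  fixes \<eta> :: "'a::metric_space \<Rightarrow> 'b" and x :: 'a
  assumes "length_space TYPE('a)"
  shows "margin \<eta> x = dist_to_set x (decision_boundary \<eta>)"
proof (rule antisym)
  show "margin \<eta> x \<le> dist_to_set x (decision_boundary \<eta>)"
    unfolding dist_to_set_def
  proof (rule INF_greatest)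
    fix z assume "z \<in> decision_boundary \<eta>"
    then have mz: "margin \<eta> z = 0" by (simp add: decision_boundary_def)
    show "margin \<eta> x \<le> ereal (dist x z)"
    proof (rule ereal_le_epsilon2)
      fix e :: real assume "0 < e"
      then obtain z' where z': "\<eta> z' \<noteq> \<eta> z" "dist z z' < e" using margin_zeroD[OF mz] by blast
      show "margin \<eta> x \<le> ereal (dist x z) + ereal e"
      proof (cases "\<eta> z = \<eta> x")
        case True
        then have "margin \<eta> x \<le> ereal (dist x z')" using z' by (intro margin_le) auto
        also have "\<dots> \<le> ereal (dist x z) + ereal e"
          using z'(2) dist_triangle[of x z' z] by (simp add: dist_commute)
        finally show ?thesis .
      next
        case False
        then have "margin \<eta> x \<le> ereal (dist x z)" by (intro margin_le) auto
        also have "\<dots> \<le> ereal (dist x z) + ereal e" using \<open>0 < e\<close> by simp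
        finally show ?thesis .
      qed
    qed
  qed
next
  show "dist_to_set x (decision_boundary \<eta>) \<le> margin \<eta> x"
    unfolding margin_def
  proof (rule INF_greatest)
    fix x' assume "x' \<in> {x'. \<eta> x' \<noteq> \<eta> x}"
    then have ne: "\<eta> x' \<noteq> \<eta> x" by simp
    show "dist_to_set x (decision_boundary \<eta>) \<le> ereal (dist x x')"
    proof (rule ereal_le_epsilon2)
      fix e :: real assume "0 < e"
      have "(INF \<gamma> \<in> {\<gamma>. path \<gamma> \<and> pathstart \<gamma> = x \<and> pathfinish \<gamma> = x'}. path_length \<gamma>)
            < ereal (dist x x' + e)"
      proof -
        have "ereal (dist x x') < ereal (dist x x' + e)" using \<open>0 < e\<close> by simp
        moreover have "ereal (dist x x') = (INF \<gamma> \<in> {\<gamma>. path \<gamma> \<and> pathstart \<gamma> = x \<and> pathfinish \<gamma> = x'}. path_length \<gamma>)"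
          using assms unfolding length_space_def by blast
        ultimately show ?thesis by simp
      qed
      then obtain \<gamma> where g: "path \<gamma>" "pathstart \<gamma> = x" "pathfinish \<gamma> = x'"
        "path_length \<gamma> < ereal (dist x x' + e)"
        by (auto simp: INF_less_iff)
      have "\<eta> (\<gamma> 1) \<noteq> \<eta> (\<gamma> 0)" using ne g(2,3) by (simp add: pathstart_def pathfinish_def)
      from boundary_on_path[OF g(1) this] obtain s where s: "s \<in> {0..1}" "\<gamma> s \<in> decision_boundary \<eta>"
        by blast
      have "dist_to_set x (decision_boundary \<eta>) \<le> ereal (dist x (\<gamma> s))"
        unfolding dist_to_set_def using s(2) by (rule INF_lower)
      also have "\<dots> \<le> path_length \<gamma>"
        using path_length_ge[OF s(1), of \<gamma>] g(2) by (simp add: pathstart_def)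
      also have "\<dots> \<le> ereal (dist x x') + ereal e" using g(4) by simp
      finally show "dist_to_set x (decision_boundary \<eta>) \<le> ereal (dist x x') + ereal e" .
    qed
  qed
qed

end
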